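(* Let $I=\begin{pmatrix}1&0\\0&1\end{pmatrix}$, $X=\begin{pmatrix}0&1\\1&0\end{pmatrix}$, $Z=\begin{pmatrix}1&0\\0&-1\end{pmatrix}$ and $Y=XZ$. For each $M:=M_1\otimes M_2\otimes M_3$ with $M_i\in\{I,X,Y,Z\}$ (an $8\times 8$ real matrix), the map $\sigma_M:V(G_{E_8})\to V(G_{E_8})$, $v_x\mapsto v_{Mx}$, is a well-defined automorphism of $G_{E_8}$. These automorphisms form a subgroup $L$ of $\mathrm{Aut}(G_{E_8})$ with $L\cong\mathbb{Z}_2^6$.
   Context: The $E_8$ root system $\Psi_{E_8}\subset\mathbb{R}^8$ consists of the 240 vectors $\pm e_i\pm e_j$ for $1\le i<j\le 8$, together with all $x=(x_1,\dots,x_8)$ with $x_i\in\{\pm1\}$ and $\prod_{i=1}^8x_i=1$. The graph $G_{E_8}$ has vertex set $\{v_x : x\in\Psi_{E_8}\}$ where $v_x=v_{-x}$ (so 120 vertices, one per line), and $v_x,v_y$ are adjacent iff $\langle x,y\rangle=0$ (standard inner product). *)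

theory Defs
  imports Complex_Main "HOL-Algebra.Algebra"
begin

text \<open>Vectors of R^8 are represented as real lists of length 8; coordinate e_(k+1) is
  list index k (k = 0..7). 8x8 (and 2x2) real matrices are functions nat => nat => real,
  only entries with indices below the dimension being relevant.\<close>

definition inner8 :: "real list \<Rightarrow> real list \<Rightarrow> real" where
  "inner8 x y = (\<Sum>k<8. x ! k * y ! k)"

definition E8_roots :: "real list set" where
  "E8_roots =
     {map (\<lambda>k. if k = i then s else if k = j then t else 0) [0..<8] | i j s t.
        i < j \<and> j < 8 \<and> s \<in> {1, -1} \<and> t \<in> {1, -1}}
   \<union> {x. length x = 8 \<and> (\<forall>k<8. x ! k \<in> {1, -1}) \<and> prod_list x = 1}"

text \<open>Vertex v_x = v_(-x): represented as the line {x, -x}.\<close>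
definition vtx :: "real list \<Rightarrow> real list set" where
  "vtx x = {x, map uminus x}"

definition V_E8 :: "real list set set" where
  "V_E8 = vtx ` E8_roots"

definition adj_E8 :: "real list set \<Rightarrow> real list set \<Rightarrow> bool" where
  "adj_E8 u v \<longleftrightarrow> (\<exists>x y. x \<in> E8_roots \<and> y \<in> E8_roots \<and> u = vtx x \<and> v = vtx y \<and> inner8 x y = 0)"

definition is_aut_E8 :: "(real list set \<Rightarrow> real list set) \<Rightarrow> bool" where
  "is_aut_E8 f \<longleftrightarrow> bij_betw f V_E8 V_E8 \<and>
     (\<forall>u\<in>V_E8. \<forall>v\<in>V_E8. adj_E8 (f u) (f v) \<longleftrightarrow> adj_E8 u v)"

text \<open>Aut(G_E8) as a subgroup of the group of bijections of the vertex set
  (functions are extensional, i.e. undefined outside V_E8).\<close>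
definition Aut_E8 :: "(real list set \<Rightarrow> real list set) monoid" where
  "Aut_E8 = (BijGroup V_E8)\<lparr>carrier := {f \<in> Bij V_E8. is_aut_E8 f}\<rparr>"

definition matI :: "nat \<Rightarrow> nat \<Rightarrow> real" where
  "matI i j = (if i = j then 1 else 0)"
definition matX :: "nat \<Rightarrow> nat \<Rightarrow> real" where
  "matX i j = (if i \<noteq> j then 1 else 0)"
definition matZ :: "nat \<Rightarrow> nat \<Rightarrow> real" where
  "matZ i j = (if i = j then (if i = 0 then 1 else -1) else 0)"

definition matmul2 :: "(nat \<Rightarrow> nat \<Rightarrow> real) \<Rightarrow> (nat \<Rightarrow> nat \<Rightarrow> real) \<Rightarrow> nat \<Rightarrow> nat \<Rightarrow> real" where
  "matmul2 A B i j = (\<Sum>k<2. A i k * B k j)"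

definition matY :: "nat \<Rightarrow> nat \<Rightarrow> real" where
  "matY = matmul2 matX matZ"

definition paulis :: "(nat \<Rightarrow> nat \<Rightarrow> real) set" where
  "paulis = {matI, matX, matY, matZ}"

text \<open>Kronecker product M1 (x) M2 (x) M3 of 2x2 matrices (standard convention:
  row index i = 4 a1 + 2 a2 + a3, 0-based).\<close>
definition kron3 :: "(nat \<Rightarrow> nat \<Rightarrow> real) \<Rightarrow> (nat \<Rightarrow> nat \<Rightarrow> real) \<Rightarrow> (nat \<Rightarrow> nat \<Rightarrow> real)
                     \<Rightarrow> nat \<Rightarrow> nat \<Rightarrow> real" where
  "kron3 A B C i j = A (i div 4) (j div 4) * B (i div 2 mod 2) (j div 2 mod 2) * C (i mod 2) (j mod 2)"

definition pauli_mats :: "(nat \<Rightarrow> nat \<Rightarrow> real) set" where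
  "pauli_mats = {kron3 A B C | A B C. A \<in> paulis \<and> B \<in> paulis \<and> C \<in> paulis}"

definition mulv8 :: "(nat \<Rightarrow> nat \<Rightarrow> real) \<Rightarrow> real list \<Rightarrow> real list" where
  "mulv8 M x = map (\<lambda>i. \<Sum>j<8. M i j * x ! j) [0..<8]"

definition sigma :: "(nat \<Rightarrow> nat \<Rightarrow> real) \<Rightarrow> real list set \<Rightarrow> real list set" where
  "sigma M = restrict (\<lambda>v. mulv8 M ` v) V_E8"

definition L_E8 :: "(real list set \<Rightarrow> real list set) set" where
  "L_E8 = sigma ` pauli_mats"

end

theory Submission
  imports Defs
begin

lemma pl: "prod_list (x::real list) = (\<Prod>i<length x. x ! i)"
  by (simp add: prod.list_conv_set_nth atLeast0LessThan)

definition qq :: "nat \<Rightarrow> nat \<Rightarrow> nat" where "qq a i = (i + a) mod 2"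
definition pm :: "nat \<Rightarrow> nat \<Rightarrow> nat \<Rightarrow> nat \<Rightarrow> real" where
  "pm a b = (if a = 0 then (if b = 0 then matI else matZ) else (if b = 0 then matX else matY))"

lemma two_cases: "(a::nat) < 2 \<Longrightarrow> a = 0 \<or> a = 1" by auto

lemma matY_eval: "matY 0 0 = 0" "matY 0 (Suc 0) = -1" "matY (Suc 0) 0 = 1" "matY (Suc 0) (Suc 0) = 0"
  by (simp_all add: matY_def matmul2_def matX_def matZ_def numeral_2_eq_2)

lemma pm_entry:
  assumes "a < 2" "b < 2" "i < 2" "j < 2"
  shows "pm a b i j = (if j = qq a i then (-1)^(b*j) else 0)"
  using two_cases[OF assms(1)] two_cases[OF assms(2)] two_cases[OF assms(3)] two_cases[OF assms(4)]
  by (auto simp: pm_def qq_def matY_eval matI_def matX_def matZ_def)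

definition tt :: "nat \<Rightarrow> nat \<Rightarrow> nat \<Rightarrow> real" where "tt a b i = (-1)^(b * ((i + a) mod 2))"
definition cmb :: "nat \<Rightarrow> nat \<Rightarrow> nat \<Rightarrow> nat" where "cmb u v w = 4*u + 2*v + w"

definition Pb :: "(nat \<Rightarrow> nat) \<Rightarrow> nat \<Rightarrow> nat" where
  "Pb \<beta> i = cmb (qq (\<beta> 0) (i div 4)) (qq (\<beta> 2) (i div 2 mod 2)) (qq (\<beta> 4) (i mod 2))"
definition Cb :: "(nat \<Rightarrow> nat) \<Rightarrow> nat \<Rightarrow> real" where
  "Cb \<beta> i = tt (\<beta> 0) (\<beta> 1) (i div 4) * tt (\<beta> 2) (\<beta> 3) (i div 2 mod 2) * tt (\<beta> 4) (\<beta> 5) (i mod 2)"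
definition Mb :: "(nat \<Rightarrow> nat) \<Rightarrow> nat \<Rightarrow> nat \<Rightarrow> real" where
  "Mb \<beta> = kron3 (pm (\<beta> 0) (\<beta> 1)) (pm (\<beta> 2) (\<beta> 3)) (pm (\<beta> 4) (\<beta> 5))"
definition okb :: "(nat \<Rightarrow> nat) \<Rightarrow> bool" where "okb \<beta> \<longleftrightarrow> (\<forall>k<6. \<beta> k < 2)"
definition sp :: "(nat \<Rightarrow> real) \<Rightarrow> (nat \<Rightarrow> nat) \<Rightarrow> real list \<Rightarrow> real list" where
  "sp c p x = map (\<lambda>i. c i * x ! p i) [0..<8]"

lemma qq_lt: "qq a i < 2" by (simp add: qq_def)
lemma qq_qq: "i < 2 \<Longrightarrow> qq a' (qq a i) = qq ((a + a') mod 2) i"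
  unfolding qq_def by presburger
lemma qq_inv: "i < 2 \<Longrightarrow> qq a (qq a i) = i"
  by (simp add: qq_def mod_add_eq add.assoc) presburger

lemma cmb_props:
  assumes "u < 2" "v < 2" "w < 2"
  shows "cmb u v w div 4 = u" "cmb u v w div 2 mod 2 = v" "cmb u v w mod 2 = w" "cmb u v w < 8"
  using two_cases[OF assms(1)] two_cases[OF assms(2)] two_cases[OF assms(3)] by (auto simp: cmb_def)

lemma lt8: "(j::nat) < 8 \<Longrightarrow> j = 0 \<or> j = 1 \<or> j = 2 \<or> j = 3 \<or> j = 4 \<or> j = 5 \<or> j = 6 \<or> j = 7"
  by linarith

lemma cmb_split: "j < 8 \<Longrightarrow> cmb (j div 4) (j div 2 mod 2) (j mod 2) = j"
  unfolding cmb_def by (drule lt8) auto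

lemma cmb_eq: "j < 8 \<Longrightarrow> (j = cmb u v w \<and> u < 2 \<and> v < 2 \<and> w < 2) \<longleftrightarrow>
   (j div 4 = u \<and> j div 2 mod 2 = v \<and> j mod 2 = w)"
  using cmb_split[of j] cmb_props[of u v w] by auto

lemma Pb_lt: "Pb \<beta> i < 8"
  by (simp add: Pb_def cmb_props qq_lt)

lemma Pb_comp: "i < 8 \<Longrightarrow> Pb \<beta>' (Pb \<beta> i) = Pb (\<lambda>k. (\<beta> k + \<beta>' k) mod 2) i"
  by (simp add: Pb_def cmb_props qq_lt qq_qq)

lemma Pb_inv: "i < 8 \<Longrightarrow> Pb \<beta> (Pb \<beta> i) = i"
  by (simp add: Pb_def cmb_props qq_lt qq_inv cmb_split)

lemma div4_lt: "(i::nat) < 8 \<Longrightarrow> i div 4 < 2" by simp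
lemma mod2_lt: "(i::nat) mod 2 < 2" by simp
lemma div2mod2_lt: "(i::nat) div 2 mod 2 < 2" by simp

lemma tt_qq: "tt a b k = (-1)^(b * qq a k)" by (simp add: tt_def qq_def)

lemma Mb_entry:
  assumes ok: "okb \<beta>" and i: "i < 8" and j: "j < 8"
  shows "Mb \<beta> i j = (if j = Pb \<beta> i then Cb \<beta> i else 0)"
proof -
  have b: "\<beta> 0 < 2" "\<beta> 1 < 2" "\<beta> 2 < 2" "\<beta> 3 < 2" "\<beta> 4 < 2" "\<beta> 5 < 2"
    using ok by (auto simp: okb_def)
  have M: "Mb \<beta> i j =
    (if j div 4 = qq (\<beta> 0) (i div 4) then (-1)^(\<beta> 1 * (j div 4)) else 0) *
    (if j div 2 mod 2 = qq (\<beta> 2) (i div 2 mod 2) then (-1)^(\<beta> 3 * (j div 2 mod 2)) else 0) *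
    (if j mod 2 = qq (\<beta> 4) (i mod 2) then (-1)^(\<beta> 5 * (j mod 2)) else 0)"
    unfolding Mb_def kron3_def
    by (simp only: pm_entry[OF b(1,2) div4_lt[OF i] div4_lt[OF j]]
      pm_entry[OF b(3,4) div2mod2_lt[of i] div2mod2_lt[of j]]
      pm_entry[OF b(5,6) mod2_lt[of i] mod2_lt[of j]])
  show ?thesis
  proof (cases "j = Pb \<beta> i")
    case True
    then have "j div 4 = qq (\<beta> 0) (i div 4)" "j div 2 mod 2 = qq (\<beta> 2) (i div 2 mod 2)"
       "j mod 2 = qq (\<beta> 4) (i mod 2)"
      by (simp_all add: Pb_def cmb_props qq_lt)
    then have "Mb \<beta> i j = Cb \<beta> i"
      unfolding M Cb_def tt_qq by (simp only: if_True simp_thms)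
    then show ?thesis using True by simp
  next
    case False
    then have "\<not> (j div 4 = qq (\<beta> 0) (i div 4) \<and> j div 2 mod 2 = qq (\<beta> 2) (i div 2 mod 2) \<and>
       j mod 2 = qq (\<beta> 4) (i mod 2))"
      using cmb_eq[OF j, of "qq (\<beta> 0) (i div 4)" "qq (\<beta> 2) (i div 2 mod 2)" "qq (\<beta> 4) (i mod 2)"] qq_lt
      unfolding Pb_def by blast
    then show ?thesis using M False by auto
  qed
qed

lemma mulv8_Mb: "okb \<beta> \<Longrightarrow> mulv8 (Mb \<beta>) x = sp (Cb \<beta>) (Pb \<beta>) x"
proof -
  assume ok: "okb \<beta>"
  have "(\<Sum>j<8. Mb \<beta> i j * x ! j) = Cb \<beta> i * x ! Pb \<beta> i" if "i < 8" for i
  proof -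
    have "(\<Sum>j<8. Mb \<beta> i j * x ! j) = (\<Sum>j<8. if j = Pb \<beta> i then Cb \<beta> i * x ! j else 0)"
      by (rule sum.cong) (simp_all add: Mb_entry[OF ok that])
    also have "\<dots> = Cb \<beta> i * x ! Pb \<beta> i" using Pb_lt[of \<beta> i] by (simp add: sum.delta)
    finally show ?thesis .
  qed
  then show ?thesis unfolding mulv8_def sp_def by (intro map_cong) auto
qed

lemma tt_comp:
  assumes "a < 2" "b < 2" "a' < 2" "b' < 2" "i < 2"
  shows "tt a b i * tt a' b' (qq a i) = (-1)^(b*a') * tt ((a+a') mod 2) ((b+b') mod 2) i"
  using two_cases[OF assms(1)] two_cases[OF assms(2)] two_cases[OF assms(3)] two_cases[OF assms(4)]
    two_cases[OF assms(5)]
  by (auto simp: tt_def qq_def)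

definition bsum :: "(nat \<Rightarrow> nat) \<Rightarrow> (nat \<Rightarrow> nat) \<Rightarrow> nat \<Rightarrow> nat" where
  "bsum \<beta> \<beta>' = (\<lambda>k. (\<beta> k + \<beta>' k) mod 2)"
definition eps :: "(nat \<Rightarrow> nat) \<Rightarrow> (nat \<Rightarrow> nat) \<Rightarrow> real" where
  "eps \<beta> \<beta>' = (-1)^(\<beta> 1 * \<beta>' 0) * (-1)^(\<beta> 3 * \<beta>' 2) * (-1)^(\<beta> 5 * \<beta>' 4)"

lemma Cb_comp:
  assumes ok: "okb \<beta>" "okb \<beta>'" and i: "i < 8"
  shows "Cb \<beta> i * Cb \<beta>' (Pb \<beta> i) = eps \<beta> \<beta>' * Cb (bsum \<beta> \<beta>') i"
proof -
  have b: "\<beta> 0 < 2" "\<beta> 1 < 2" "\<beta> 2 < 2" "\<beta> 3 < 2" "\<beta> 4 < 2" "\<beta> 5 < 2"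
    using ok by (auto simp: okb_def)
  have b': "\<beta>' 0 < 2" "\<beta>' 1 < 2" "\<beta>' 2 < 2" "\<beta>' 3 < 2" "\<beta>' 4 < 2" "\<beta>' 5 < 2"
    using ok by (auto simp: okb_def)
  have "Cb \<beta>' (Pb \<beta> i) = tt (\<beta>' 0) (\<beta>' 1) (qq (\<beta> 0) (i div 4)) *
     tt (\<beta>' 2) (\<beta>' 3) (qq (\<beta> 2) (i div 2 mod 2)) * tt (\<beta>' 4) (\<beta>' 5) (qq (\<beta> 4) (i mod 2))"
    by (simp add: Cb_def Pb_def cmb_props qq_lt)
  then have "Cb \<beta> i * Cb \<beta>' (Pb \<beta> i) =
     (tt (\<beta> 0) (\<beta> 1) (i div 4) * tt (\<beta>' 0) (\<beta>' 1) (qq (\<beta> 0) (i div 4))) *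
     (tt (\<beta> 2) (\<beta> 3) (i div 2 mod 2) * tt (\<beta>' 2) (\<beta>' 3) (qq (\<beta> 2) (i div 2 mod 2))) *
     (tt (\<beta> 4) (\<beta> 5) (i mod 2) * tt (\<beta>' 4) (\<beta>' 5) (qq (\<beta> 4) (i mod 2)))"
    by (simp add: Cb_def mult_ac)
  also have "\<dots> = eps \<beta> \<beta>' * Cb (bsum \<beta> \<beta>') i"
  proof -
    have e1: "tt (\<beta> 0) (\<beta> 1) (i div 4) * tt (\<beta>' 0) (\<beta>' 1) (qq (\<beta> 0) (i div 4)) =
      (-1)^(\<beta> 1 * \<beta>' 0) * tt ((\<beta> 0 + \<beta>' 0) mod 2) ((\<beta> 1 + \<beta>' 1) mod 2) (i div 4)"
      by (rule tt_comp) (use b b' i in auto)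
    have e2: "tt (\<beta> 2) (\<beta> 3) (i div 2 mod 2) * tt (\<beta>' 2) (\<beta>' 3) (qq (\<beta> 2) (i div 2 mod 2)) =
      (-1)^(\<beta> 3 * \<beta>' 2) * tt ((\<beta> 2 + \<beta>' 2) mod 2) ((\<beta> 3 + \<beta>' 3) mod 2) (i div 2 mod 2)"
      by (rule tt_comp) (use b b' i in auto)
    have e3: "tt (\<beta> 4) (\<beta> 5) (i mod 2) * tt (\<beta>' 4) (\<beta>' 5) (qq (\<beta> 4) (i mod 2)) =
      (-1)^(\<beta> 5 * \<beta>' 4) * tt ((\<beta> 4 + \<beta>' 4) mod 2) ((\<beta> 5 + \<beta>' 5) mod 2) (i mod 2)"
      by (rule tt_comp) (use b b' i in auto)
    show ?thesis unfolding e1 e2 e3 eps_def Cb_def bsum_def by (simp only: mult_ac)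
  qed
  finally show ?thesis .
qed

lemma pm1_pow: "((-1::real)^n = 1) \<or> ((-1::real)^n = -1)"
  by (cases "even n") auto

lemma tt_pm1: "tt a b k = 1 \<or> tt a b k = -1"
  unfolding tt_def by (rule pm1_pow)

lemma Cb_pm1: "Cb \<beta> i = 1 \<or> Cb \<beta> i = -1"
  unfolding Cb_def using tt_pm1[of "\<beta> 0" "\<beta> 1" "i div 4"] tt_pm1[of "\<beta> 2" "\<beta> 3" "i div 2 mod 2"]
    tt_pm1[of "\<beta> 4" "\<beta> 5" "i mod 2"]
  by auto

lemma tt_sq: "tt a b k * tt a b k = 1"
  using tt_pm1[of a b k] by auto

lemma prod8: "(\<Prod>i<(8::nat). F i) = F 0 * F 1 * F 2 * F 3 * F 4 * F 5 * F 6 * (F 7 :: real)"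
  by (simp add: eval_nat_numeral lessThan_Suc mult_ac)

lemma alg8: "(a0::real)*a0 = 1 \<Longrightarrow> a1 * a1 = 1 \<Longrightarrow> b0 * b0 = 1 \<Longrightarrow> b1 * b1=1 \<Longrightarrow> c0 * c0=1 \<Longrightarrow> c1 * c1=1 \<Longrightarrow>
  (a0 * b0 * c0) * (a0 * b0 * c1) * (a0 * b1 * c0) * (a0 * b1 * c1) * (a1 * b0 * c0) * (a1 * b0 * c1) * (a1 * b1 * c0) * (a1 * b1 * c1) = 1"
proof -
  have "(a0 * b0 * c0) * (a0 * b0 * c1) * (a0 * b1 * c0) * (a0 * b1 * c1) * (a1 * b0 * c0) * (a1 * b0 * c1) * (a1 * b1 * c0) * (a1 * b1 * c1)
    = (a0 * a0) * (a0 * a0) * (a1 * a1) * (a1 * a1) * (b0 * b0) * (b0 * b0) * (b1 * b1) * (b1 * b1) * (c0 * c0) * (c0 * c0) * (c1 * c1) * (c1 * c1)"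
    by (simp add: mult_ac)
  then show "a0 * a0 = 1 \<Longrightarrow> a1 * a1 = 1 \<Longrightarrow> b0 * b0 = 1 \<Longrightarrow> b1 * b1=1 \<Longrightarrow> c0 * c0=1 \<Longrightarrow> c1 * c1=1 \<Longrightarrow> ?thesis"
    by simp
qed

lemma Cb_prod: "(\<Prod>i<8. Cb \<beta> i) = 1"
  unfolding prod8 Cb_def
  by (simp add: alg8 tt_sq)

lemma sp_len[simp]: "length (sp c p x) = 8" by (simp add: sp_def)
lemma sp_nth: "k < 8 \<Longrightarrow> sp c p x ! k = c k * x ! p k" by (simp add: sp_def)

definition good :: "(nat \<Rightarrow> real) \<Rightarrow> (nat \<Rightarrow> nat) \<Rightarrow> bool" where
  "good c p \<longleftrightarrow> (\<forall>i<8. p i < 8 \<and> p (p i) = i \<and> (c i = 1 \<or> c i = -1)) \<and> (\<Prod>i<8. c i) = 1"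

lemma roots_len: "x \<in> E8_roots \<Longrightarrow> length x = 8"
  by (auto simp: E8_roots_def)

lemma good_prod: "good c p \<Longrightarrow> (\<Prod>i<8. f (p i)) = (\<Prod>i<8. (f i::real))"
  unfolding good_def by (intro prod.reindex_bij_witness[of _ p p]) auto
lemma good_sum: "good c p \<Longrightarrow> (\<Sum>i<8. f (p i)) = (\<Sum>i<8. (f i::real))"
  unfolding good_def by (intro sum.reindex_bij_witness[of _ p p]) auto

lemma good_sq: "good c p \<Longrightarrow> i < 8 \<Longrightarrow> c i * c i = 1"
  unfolding good_def by force

lemma E8_I1: "i < j \<Longrightarrow> j < 8 \<Longrightarrow> s \<in> {1, -1} \<Longrightarrow> t \<in> {1, -1} \<Longrightarrow>
  map (\<lambda>k. if k = i then s else if k = j then t else 0) [0..<8] \<in> E8_roots"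
  unfolding E8_roots_def by (rule UnI1) blast

lemma sp_E8:
  assumes g: "good c p" and x: "x \<in> E8_roots"
  shows "sp c p x \<in> E8_roots"
proof -
  have pl8: "\<And>i. i < 8 \<Longrightarrow> p i < 8" and pp: "\<And>i. i < 8 \<Longrightarrow> p (p i) = i"
    and cpm: "\<And>i. i < 8 \<Longrightarrow> c i = 1 \<or> c i = -1" and cprod: "(\<Prod>i<8. c i) = 1"
    using g unfolding good_def by auto
  from x consider
    (A) i j s t where "x = map (\<lambda>k. if k = i then s else if k = j then t else 0) [0..<8]"
      "i < j" "j < 8" "s \<in> {1, -1}" "t \<in> {1, -1}"
  | (B) "length x = 8" "\<forall>k<8. x ! k \<in> {1, -1}" "prod_list x = 1"
    unfolding E8_roots_def by blast
  then show ?thesis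
  proof cases
    case A
    have iff: "p k = m \<longleftrightarrow> k = p m" if "k < 8" "m < 8" for k m
      using pp that by metis
    have pi8: "p i < 8" "p j < 8" using A pl8 by auto
    have ne: "p i \<noteq> p j" using pp[of i] pp[of j] A by auto
    have nth: "sp c p x ! k = (if k = p i then c (p i) * s else if k = p j then c (p j) * t else 0)"
      if "k < 8" for k
      using that A iff[OF that, of i] iff[OF that, of j] pl8[OF that] by (auto simp: sp_nth)
    have cs: "c (p i) * s \<in> {1, -1}" "c (p j) * t \<in> {1, -1}"
      using cpm[OF pl8[of i]] cpm[OF pl8[of j]] A by auto
    show ?thesis
    proof (cases "p i < p j")
      case True
      have "sp c p x = map (\<lambda>k. if k = p i then c (p i) * s else if k = p j then c (p j) * t else 0) [0..<8]"
        by (rule nth_equalityI) (auto simp: nth)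
      then show ?thesis using E8_I1[OF True pi8(2) cs(1) cs(2)] by simp
    next
      case False
      then have lt: "p j < p i" using ne by auto
      have "sp c p x = map (\<lambda>k. if k = p j then c (p j) * t else if k = p i then c (p i) * s else 0) [0..<8]"
        by (rule nth_equalityI) (auto simp: nth ne)
      then show ?thesis using E8_I1[OF lt pi8(1) cs(2) cs(1)] by simp
    qed
  next
    case B
    have ent: "\<forall>k<8. sp c p x ! k \<in> {1, -1}"
    proof (intro allI impI)
      fix k :: nat assume k: "k < 8"
      have "x ! p k = 1 \<or> x ! p k = -1" using B pl8[OF k] by auto
      then show "sp c p x ! k \<in> {1, -1}" using cpm[OF k] k by (auto simp: sp_nth)
    qed
    have "prod_list (sp c p x) = (\<Prod>k<8. c k * x ! p k)"
      by (simp add: pl sp_nth)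
    also have "\<dots> = (\<Prod>k<8. c k) * (\<Prod>k<8. x ! p k)" by (rule prod.distrib)
    also have "\<dots> = (\<Prod>k<8. x ! k)" using cprod good_prod[OF g, of "\<lambda>k. x ! k"] by simp
    also have "\<dots> = 1" using B by (simp add: pl)
    finally show ?thesis unfolding E8_roots_def using ent by auto
  qed
qed

lemma sp_inner: "good c p \<Longrightarrow> inner8 (sp c p x) (sp c p y) = inner8 x y"
proof -
  assume g: "good c p"
  have "inner8 (sp c p x) (sp c p y) = (\<Sum>k<8. x ! p k * y ! p k)"
    unfolding inner8_def
    by (rule sum.cong) (auto simp: sp_nth good_sq[OF g, symmetric] mult_ac)
  also have "\<dots> = inner8 x y" unfolding inner8_def by (rule good_sum[OF g])
  finally show ?thesis .
qed

lemma sp_uminus: "good c p \<Longrightarrow> length x = 8 \<Longrightarrow> sp c p (map uminus x) = map uminus (sp c p x)"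
  by (rule nth_equalityI) (auto simp: sp_nth good_def)

lemma sp_comp: "(\<And>i. i < 8 \<Longrightarrow> p i < 8) \<Longrightarrow>
   sp c p (sp c' p' x) = sp (\<lambda>i. c i * c' (p i)) (\<lambda>i. p' (p i)) x"
  by (rule nth_equalityI) (auto simp: sp_nth)

lemma sp_cong: "(\<And>i. i < 8 \<Longrightarrow> c i = c' i \<and> p i = p' i) \<Longrightarrow> sp c p x = sp c' p' x"
  unfolding sp_def by (rule map_cong) auto

lemma vtx_neg: "vtx (map uminus x) = vtx x"
  by (auto simp: vtx_def comp_def)

lemma vtx_scale: "e = 1 \<or> e = -1 \<Longrightarrow> vtx (sp (\<lambda>i. e * c i) p x) = vtx (sp c p x)"
proof -
  assume "e = 1 \<or> e = -1"
  moreover have "sp (\<lambda>i. - c i) p x = map uminus (sp c p x)"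
    by (rule nth_equalityI) (auto simp: sp_nth)
  ultimately show ?thesis by (auto simp: vtx_neg)
qed

lemma inner_neg: "length x = 8 \<Longrightarrow> inner8 (map uminus x) y = - inner8 x y"
  unfolding inner8_def by (simp add: sum_negf[symmetric])

lemma adj_iff: "x \<in> E8_roots \<Longrightarrow> y \<in> E8_roots \<Longrightarrow> adj_E8 (vtx x) (vtx y) \<longleftrightarrow> inner8 x y = 0"
proof
  assume x: "x \<in> E8_roots" and y: "y \<in> E8_roots" and "adj_E8 (vtx x) (vtx y)"
  then obtain x' y' where r: "x' \<in> E8_roots" "y' \<in> E8_roots" and e: "vtx x = vtx x'" "vtx y = vtx y'"
    and i: "inner8 x' y' = 0" unfolding adj_E8_def by blast
  have "x' = x \<or> x' = map uminus x" using e(1) unfolding vtx_def by blast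
  moreover have "y' = y \<or> y' = map uminus y" using e(2) unfolding vtx_def by blast
  moreover have "inner8 x y = inner8 y x" for x y unfolding inner8_def by (simp add: mult.commute)
  ultimately show "inner8 x y = 0" using i roots_len[OF x] roots_len[OF y] inner_neg
    by (smt (verit))
next
  assume "x \<in> E8_roots" "y \<in> E8_roots" "inner8 x y = 0"
  then show "adj_E8 (vtx x) (vtx y)" unfolding adj_E8_def by blast
qed


lemma good_b: "good (Cb \<beta>) (Pb \<beta>)"
  unfolding good_def using Pb_lt Pb_inv Cb_pm1 Cb_prod by auto

lemma mulv8_Mb': "okb \<beta> \<Longrightarrow> mulv8 (Mb \<beta>) = sp (Cb \<beta>) (Pb \<beta>)"
  using mulv8_Mb by blast

definition sig :: "(nat \<Rightarrow> nat) \<Rightarrow> real list set \<Rightarrow> real list set" where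
  "sig \<beta> = sigma (Mb \<beta>)"

lemma vtx_V: "x \<in> E8_roots \<Longrightarrow> vtx x \<in> V_E8" by (simp add: V_E8_def)

lemma sig_vtx: "okb \<beta> \<Longrightarrow> x \<in> E8_roots \<Longrightarrow> sig \<beta> (vtx x) = vtx (sp (Cb \<beta>) (Pb \<beta>) x)"
  unfolding sig_def sigma_def using vtx_V[of x] mulv8_Mb'[of \<beta>]
    sp_uminus[OF good_b roots_len, of x \<beta>]
  by (simp add: vtx_def)

lemma sp_E8_b: "x \<in> E8_roots \<Longrightarrow> sp (Cb \<beta>) (Pb \<beta>) x \<in> E8_roots"
  by (rule sp_E8[OF good_b])

lemma sig_V: "okb \<beta> \<Longrightarrow> v \<in> V_E8 \<Longrightarrow> sig \<beta> v \<in> V_E8"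
  unfolding V_E8_def using sig_vtx sp_E8_b by auto

definition bzero :: "nat \<Rightarrow> nat" where "bzero = (\<lambda>_. 0)"

lemma sp_zero: "length x = 8 \<Longrightarrow> sp (Cb bzero) (Pb bzero) x = x"
proof (rule nth_equalityI)
  fix i assume "length x = 8" "i < length (sp (Cb bzero) (Pb bzero) x)"
  then have i: "i < 8" by simp
  have "Pb bzero i = i" unfolding Pb_def bzero_def qq_def using i cmb_split[OF i] by simp
  moreover have "Cb bzero i = 1" by (simp add: Cb_def tt_def bzero_def)
  ultimately show "sp (Cb bzero) (Pb bzero) x ! i = x ! i" using i by (simp add: sp_nth)
qed simp

lemma okb_bsum: "okb (bsum \<beta> \<beta>')" by (simp add: okb_def bsum_def)

lemma eps_pm1: "eps \<beta> \<beta>' = 1 \<or> eps \<beta> \<beta>' = -1"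
  unfolding eps_def using pm1_pow[of "\<beta> 1 * \<beta>' 0"] pm1_pow[of "\<beta> 3 * \<beta>' 2"] pm1_pow[of "\<beta> 5 * \<beta>' 4"]
  by auto

lemma sig_comp: "okb \<beta> \<Longrightarrow> okb \<beta>' \<Longrightarrow> x \<in> E8_roots \<Longrightarrow>
  sig \<beta> (sig \<beta>' (vtx x)) = sig (bsum \<beta> \<beta>') (vtx x)"
proof -
  assume b: "okb \<beta>" and b': "okb \<beta>'" and x: "x \<in> E8_roots"
  have "sig \<beta> (sig \<beta>' (vtx x)) = vtx (sp (Cb \<beta>) (Pb \<beta>) (sp (Cb \<beta>') (Pb \<beta>') x))"
    using sig_vtx[OF b' x] sig_vtx[OF b sp_E8_b[OF x]] by simp
  also have "sp (Cb \<beta>) (Pb \<beta>) (sp (Cb \<beta>') (Pb \<beta>') x) =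
     sp (\<lambda>i. Cb \<beta> i * Cb \<beta>' (Pb \<beta> i)) (\<lambda>i. Pb \<beta>' (Pb \<beta> i)) x"
    by (rule sp_comp) (rule Pb_lt)
  also have "\<dots> = sp (\<lambda>i. eps \<beta> \<beta>' * Cb (bsum \<beta> \<beta>') i) (Pb (bsum \<beta> \<beta>')) x"
    by (rule sp_cong) (simp add: Cb_comp[OF b b'] Pb_comp bsum_def)
  also have "vtx \<dots> = vtx (sp (Cb (bsum \<beta> \<beta>')) (Pb (bsum \<beta> \<beta>')) x)"
    by (rule vtx_scale[OF eps_pm1])
  also have "\<dots> = sig (bsum \<beta> \<beta>') (vtx x)"
    using sig_vtx[OF okb_bsum x] by simp
  finally show ?thesis .
qed

lemma bsum_self: "bsum \<beta> \<beta> = bzero"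
  by (auto simp: bsum_def bzero_def fun_eq_iff)

lemma sig_invol: "okb \<beta> \<Longrightarrow> v \<in> V_E8 \<Longrightarrow> sig \<beta> (sig \<beta> v) = v"
proof -
  assume b: "okb \<beta>" and v: "v \<in> V_E8"
  then obtain x where x: "x \<in> E8_roots" "v = vtx x" by (auto simp: V_E8_def)
  have "okb bzero" by (simp add: okb_def bzero_def)
  then show ?thesis using sig_comp[OF b b x(1)] sig_vtx[OF _ x(1)] sp_zero[OF roots_len[OF x(1)]] x(2)
    by (simp add: bsum_self)
qed

lemma sig_Bij: "okb \<beta> \<Longrightarrow> sig \<beta> \<in> Bij V_E8"
  unfolding Bij_def
proof
  assume b: "okb \<beta>"
  show "sig \<beta> \<in> extensional V_E8" by (simp add: sig_def sigma_def)
  show "sig \<beta> \<in> {f. bij_betw f V_E8 V_E8}"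
    using bij_betw_byWitness[of V_E8 "sig \<beta>" "sig \<beta>" V_E8] sig_invol[OF b] sig_V[OF b] by auto
qed

lemma sig_aut: "okb \<beta> \<Longrightarrow> is_aut_E8 (sig \<beta>)"
  unfolding is_aut_E8_def
proof (intro conjI ballI)
  assume b: "okb \<beta>"
  show "bij_betw (sig \<beta>) V_E8 V_E8" using sig_Bij[OF b] by (simp add: Bij_def)
  fix u v assume "u \<in> V_E8" "v \<in> V_E8"
  then obtain x y where x: "x \<in> E8_roots" "u = vtx x" and y: "y \<in> E8_roots" "v = vtx y"
    by (auto simp: V_E8_def)
  show "adj_E8 (sig \<beta> u) (sig \<beta> v) = adj_E8 u v"
    using sig_vtx[OF b x(1)] sig_vtx[OF b y(1)] adj_iff[OF x(1) y(1)]
      adj_iff[OF sp_E8_b[OF x(1)] sp_E8_b[OF y(1)]] sp_inner[OF good_b] x(2) y(2)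
    by simp
qed

lemma sig_carrier: "okb \<beta> \<Longrightarrow> sig \<beta> \<in> carrier Aut_E8"
  using sig_Bij sig_aut by (simp add: Aut_E8_def BijGroup_def)


lemma Aut_sub: "subgroup {f \<in> Bij V_E8. is_aut_E8 f} (BijGroup V_E8)"
proof (rule group.subgroupI[OF group_BijGroup])
  show "{f \<in> Bij V_E8. is_aut_E8 f} \<subseteq> carrier (BijGroup V_E8)" by (auto simp: BijGroup_def)
  have "(\<lambda>x\<in>V_E8. x) \<in> Bij V_E8" by (rule id_Bij)
  moreover have "is_aut_E8 (\<lambda>x\<in>V_E8. x)"
    using id_Bij[of V_E8] by (simp add: is_aut_E8_def Bij_def)
  ultimately show "{f \<in> Bij V_E8. is_aut_E8 f} \<noteq> {}" by blast
next
  fix a assume a: "a \<in> {f \<in> Bij V_E8. is_aut_E8 f}"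
  then have aB: "a \<in> Bij V_E8" and bij: "bij_betw a V_E8 V_E8"
    and adj: "\<And>u v. u \<in> V_E8 \<Longrightarrow> v \<in> V_E8 \<Longrightarrow> adj_E8 (a u) (a v) = adj_E8 u v"
    by (auto simp: is_aut_E8_def)
  have inv: "inv\<^bsub>BijGroup V_E8\<^esub> a = (\<lambda>x\<in>V_E8. inv_into V_E8 a x)"
    by (rule inv_BijGroup[OF aB])
  have iB: "(\<lambda>x\<in>V_E8. inv_into V_E8 a x) \<in> Bij V_E8" by (rule restrict_inv_into_Bij[OF aB])
  have "is_aut_E8 (\<lambda>x\<in>V_E8. inv_into V_E8 a x)"
    unfolding is_aut_E8_def
  proof (intro conjI ballI)
    show "bij_betw (\<lambda>x\<in>V_E8. inv_into V_E8 a x) V_E8 V_E8" using iB by (simp add: Bij_def)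
    fix u v assume u: "u \<in> V_E8" and v: "v \<in> V_E8"
    have u': "inv_into V_E8 a u \<in> V_E8" "a (inv_into V_E8 a u) = u"
      using bij u by (auto simp: bij_betw_def inv_into_into f_inv_into_f)
    have v': "inv_into V_E8 a v \<in> V_E8" "a (inv_into V_E8 a v) = v"
      using bij v by (auto simp: bij_betw_def inv_into_into f_inv_into_f)
    show "adj_E8 ((\<lambda>x\<in>V_E8. inv_into V_E8 a x) u) ((\<lambda>x\<in>V_E8. inv_into V_E8 a x) v) = adj_E8 u v"
      using adj[OF u'(1) v'(1)] u'(2) v'(2) u v by simp
  qed
  then show "inv\<^bsub>BijGroup V_E8\<^esub> a \<in> {f \<in> Bij V_E8. is_aut_E8 f}" using inv iB by simp
next
  fix a b assume a: "a \<in> {f \<in> Bij V_E8. is_aut_E8 f}" and b: "b \<in> {f \<in> Bij V_E8. is_aut_E8 f}"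
  then have aB: "a \<in> Bij V_E8" and bB: "b \<in> Bij V_E8" by auto
  have m: "a \<otimes>\<^bsub>BijGroup V_E8\<^esub> b = compose V_E8 a b" using aB bB by (simp add: BijGroup_def)
  have cB: "compose V_E8 a b \<in> Bij V_E8" by (rule compose_Bij[OF aB bB])
  have "is_aut_E8 (compose V_E8 a b)"
    unfolding is_aut_E8_def
  proof (intro conjI ballI)
    show "bij_betw (compose V_E8 a b) V_E8 V_E8" using cB by (simp add: Bij_def)
    fix u v assume u: "u \<in> V_E8" and v: "v \<in> V_E8"
    have "b u \<in> V_E8" "b v \<in> V_E8" using bB u v Bij_imp_funcset by blast+
    then show "adj_E8 (compose V_E8 a b u) (compose V_E8 a b v) = adj_E8 u v"
      using a b u v by (simp add: compose_def is_aut_E8_def)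
  qed
  then show "a \<otimes>\<^bsub>BijGroup V_E8\<^esub> b \<in> {f \<in> Bij V_E8. is_aut_E8 f}" using m cB by simp
qed

lemma group_Aut: "group Aut_E8"
  unfolding Aut_E8_def by (rule subgroup.subgroup_is_group[OF Aut_sub group_BijGroup])

abbreviation PG :: "(nat \<Rightarrow> int) monoid" where
  "PG \<equiv> product_group {..<(6::nat)} (\<lambda>_. integer_mod_group 2)"

definition bits :: "(nat \<Rightarrow> int) \<Rightarrow> nat \<Rightarrow> nat" where "bits g = (\<lambda>k. nat (g k))"

lemma carrier_PG: "carrier PG = (\<Pi>\<^sub>E i\<in>{..<6}. {0..<2})"
  by (simp add: carrier_integer_mod_group)

lemma okb_bits: "g \<in> carrier PG \<Longrightarrow> okb (bits g)"
  unfolding okb_def bits_def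
proof (intro allI impI)
  fix k :: nat assume "g \<in> carrier PG" "k < 6"
  then have "0 \<le> g k \<and> g k < 2" unfolding carrier_PG by (auto simp: PiE_iff)
  then show "nat (g k) < 2" by linarith
qed

lemma Mb_cong: "(\<And>k. k < 6 \<Longrightarrow> \<beta> k = \<beta>' k) \<Longrightarrow> Mb \<beta> = Mb \<beta>'"
  unfolding Mb_def by simp

lemma sig_cong: "(\<And>k. k < 6 \<Longrightarrow> \<beta> k = \<beta>' k) \<Longrightarrow> sig \<beta> = sig \<beta>'"
  unfolding sig_def using Mb_cong by metis

lemma bits_mult: "g \<in> carrier PG \<Longrightarrow> h \<in> carrier PG \<Longrightarrow> k < 6 \<Longrightarrow>
  bits (g \<otimes>\<^bsub>PG\<^esub> h) k = bsum (bits g) (bits h) k"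
  unfolding carrier_PG bits_def bsum_def
  by (auto simp: PiE_iff nat_mod_distrib nat_add_distrib)

definition phi :: "(nat \<Rightarrow> int) \<Rightarrow> real list set \<Rightarrow> real list set" where
  "phi g = sig (bits g)"

lemma mult_Aut: "f \<in> Bij V_E8 \<Longrightarrow> g \<in> Bij V_E8 \<Longrightarrow> f \<otimes>\<^bsub>Aut_E8\<^esub> g = compose V_E8 f g"
  by (simp add: Aut_E8_def BijGroup_def)

lemma phi_mult: "g \<in> carrier PG \<Longrightarrow> h \<in> carrier PG \<Longrightarrow>
   phi (g \<otimes>\<^bsub>PG\<^esub> h) = phi g \<otimes>\<^bsub>Aut_E8\<^esub> phi h"
proof -
  assume g: "g \<in> carrier PG" and h: "h \<in> carrier PG"
  have e: "phi (g \<otimes>\<^bsub>PG\<^esub> h) = sig (bsum (bits g) (bits h))"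
    unfolding phi_def by (rule sig_cong) (rule bits_mult[OF g h])
  have m: "phi g \<otimes>\<^bsub>Aut_E8\<^esub> phi h = compose V_E8 (phi g) (phi h)"
    unfolding phi_def by (rule mult_Aut[OF sig_Bij[OF okb_bits[OF g]] sig_Bij[OF okb_bits[OF h]]])
  show ?thesis unfolding e m
  proof
    fix v
    show "sig (bsum (bits g) (bits h)) v = compose V_E8 (phi g) (phi h) v"
    proof (cases "v \<in> V_E8")
      case True
      then obtain x where x: "x \<in> E8_roots" "v = vtx x" by (auto simp: V_E8_def)
      then show ?thesis using sig_comp[OF okb_bits[OF g] okb_bits[OF h] x(1)] True
        by (simp add: compose_def phi_def)
    next
      case False
      then show ?thesis by (simp add: compose_def sig_def sigma_def)
    qed
  qed
qed

lemma phi_hom: "phi \<in> hom PG Aut_E8"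
  unfolding hom_def using phi_mult sig_carrier okb_bits by (auto simp: phi_def)

lemma group_PG: "group PG" by simp

lemma group_hom_phi: "group_hom PG Aut_E8 phi"
  by (simp add: group_hom_def group_hom_axioms_def group_Aut phi_hom)


lemma okb_cases: "okb \<beta> \<Longrightarrow> (\<beta> 0 = 0 \<or> \<beta> 0 = 1) \<and> (\<beta> 1 = 0 \<or> \<beta> 1 = 1) \<and>
  (\<beta> 2 = 0 \<or> \<beta> 2 = 1) \<and> (\<beta> 3 = 0 \<or> \<beta> 3 = 1) \<and> (\<beta> 4 = 0 \<or> \<beta> 4 = 1) \<and> (\<beta> 5 = 0 \<or> \<beta> 5 = 1)"
proof -
  assume "okb \<beta>"
  then have "\<beta> 0 < 2" "\<beta> 1 < 2" "\<beta> 2 < 2" "\<beta> 3 < 2" "\<beta> 4 < 2" "\<beta> 5 < 2"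
    by (auto simp: okb_def)
  then show ?thesis using two_cases by blast
qed

lemma upt8: "[0..<8] = [0,1,2,3,4,5,6,7::nat]" by (simp add: upt_rec)

lemma kern_bits:
  assumes b: "okb \<beta>"
    and h1: "sp (Cb \<beta>) (Pb \<beta>) [1,1,0,0,0,0,0,0] \<in> vtx [1,1,0,0,0,0,0,0]"
    and h2: "sp (Cb \<beta>) (Pb \<beta>) [1,0,1,0,0,0,0,0] \<in> vtx [1,0,1,0,0,0,0,0]"
    and h3: "sp (Cb \<beta>) (Pb \<beta>) [1,0,0,0,1,0,0,0] \<in> vtx [1,0,0,0,1,0,0,0]"
  shows "\<beta> 0 = 0 \<and> \<beta> 1 = 0 \<and> \<beta> 2 = 0 \<and> \<beta> 3 = 0 \<and> \<beta> 4 = 0 \<and> \<beta> 5 = 0"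
  using okb_cases[OF b] h1 h2 h3
  unfolding sp_def upt8 vtx_def Cb_def Pb_def tt_def qq_def cmb_def
  by (elim conjE disjE) simp_all


lemma paulis_pm: "A \<in> paulis \<Longrightarrow> \<exists>a b. a < 2 \<and> b < 2 \<and> A = pm a b"
proof -
  assume "A \<in> paulis"
  then have "A = pm 0 0 \<or> A = pm 0 1 \<or> A = pm 1 0 \<or> A = pm 1 1"
    unfolding paulis_def pm_def by auto
  then show ?thesis by (metis one_less_numeral_iff pos2 semiring_norm(76))
qed

lemma pm_paulis: "a < 2 \<Longrightarrow> b < 2 \<Longrightarrow> pm a b \<in> paulis"
  unfolding paulis_def pm_def by auto

lemma lt6: "(j::nat) < 6 \<Longrightarrow> j = 0 \<or> j = 1 \<or> j = 2 \<or> j = 3 \<or> j = 4 \<or> j = 5"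
  by linarith

lemma pauli_eq: "pauli_mats = (\<lambda>g. Mb (bits g)) ` carrier PG"
proof
  show "pauli_mats \<subseteq> (\<lambda>g. Mb (bits g)) ` carrier PG"
  proof
    fix M assume "M \<in> pauli_mats"
    then obtain A B C where M: "M = kron3 A B C" and ABC: "A \<in> paulis" "B \<in> paulis" "C \<in> paulis"
      unfolding pauli_mats_def by blast
    obtain a1 b1 where 1: "a1 < 2" "b1 < 2" "A = pm a1 b1" using paulis_pm[OF ABC(1)] by blast
    obtain a2 b2 where 2: "a2 < 2" "b2 < 2" "B = pm a2 b2" using paulis_pm[OF ABC(2)] by blast
    obtain a3 b3 where 3: "a3 < 2" "b3 < 2" "C = pm a3 b3" using paulis_pm[OF ABC(3)] by blast
    define g where "g = (\<lambda>k\<in>{..<6::nat}. int ([a1,b1,a2,b2,a3,b3] ! k))"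
    have "g \<in> carrier PG" unfolding carrier_PG
    proof (rule PiE_I)
      fix k assume "k \<in> {..<6::nat}"
      then have "k < 6" by simp
      then show "g k \<in> {0..<2}" unfolding g_def using 1 2 3 by (drule_tac lt6) auto
    qed (simp add: g_def)
    moreover have "Mb (bits g) = M"
      unfolding M Mb_def bits_def g_def using 1 2 3 by simp
    ultimately show "M \<in> (\<lambda>g. Mb (bits g)) ` carrier PG" by blast
  qed
next
  show "(\<lambda>g. Mb (bits g)) ` carrier PG \<subseteq> pauli_mats"
  proof
    fix M assume "M \<in> (\<lambda>g. Mb (bits g)) ` carrier PG"
    then obtain g where g: "g \<in> carrier PG" "M = Mb (bits g)" by blast
    have "okb (bits g)" by (rule okb_bits[OF g(1)])
    then have "bits g k < 2" if "k < 6" for k using that unfolding okb_def by blast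
    then have "pm (bits g 0) (bits g 1) \<in> paulis" "pm (bits g 2) (bits g 3) \<in> paulis"
      "pm (bits g 4) (bits g 5) \<in> paulis" by (simp_all add: pm_paulis)
    then show "M \<in> pauli_mats" unfolding g(2) Mb_def pauli_mats_def by blast
  qed
qed

lemma L_eq: "L_E8 = phi ` carrier PG"
  unfolding L_E8_def pauli_eq image_image phi_def sig_def ..

lemma root_t: "[1,1,0,0,0,0,0,0] \<in> E8_roots" "[1,0,1,0,0,0,0,0] \<in> E8_roots" "[1,0,0,0,1,0,0,0] \<in> E8_roots"
  using E8_I1[of 0 1 1 1] E8_I1[of 0 2 1 1] E8_I1[of 0 4 1 1] by (simp_all add: upt8)

lemma one_Aut: "\<one>\<^bsub>Aut_E8\<^esub> = (\<lambda>x\<in>V_E8. x)"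
  by (simp add: Aut_E8_def BijGroup_def)

lemma kernel_phi: "kernel PG Aut_E8 phi = {\<one>\<^bsub>PG\<^esub>}"
proof
  show "{\<one>\<^bsub>PG\<^esub>} \<subseteq> kernel PG Aut_E8 phi"
    using group_hom.hom_one[OF group_hom_phi] monoid.one_closed[OF group.is_monoid[OF group_PG]]
    by (auto simp: kernel_def)
  show "kernel PG Aut_E8 phi \<subseteq> {\<one>\<^bsub>PG\<^esub>}"
  proof
    fix g assume "g \<in> kernel PG Aut_E8 phi"
    then have g: "g \<in> carrier PG" and e: "phi g = (\<lambda>x\<in>V_E8. x)"
      by (auto simp: kernel_def one_Aut)
    have b: "okb (bits g)" by (rule okb_bits[OF g])
    have fix_t: "sp (Cb (bits g)) (Pb (bits g)) t \<in> vtx t" if t: "t \<in> E8_roots" for t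
    proof -
      have "vtx (sp (Cb (bits g)) (Pb (bits g)) t) = vtx t"
        using sig_vtx[OF b t] e vtx_V[OF t] unfolding phi_def by simp
      then show ?thesis unfolding vtx_def by blast
    qed
    have z: "bits g k = 0" if "k < 6" for k
      using kern_bits[OF b fix_t[OF root_t(1)] fix_t[OF root_t(2)] fix_t[OF root_t(3)]] lt6[OF that]
      by auto
    have "g = (\<lambda>i\<in>{..<6}. 0)"
    proof
      fix k show "g k = (\<lambda>i\<in>{..<6::nat}. 0::int) k"
      proof (cases "k < 6")
        case True
        then have "0 \<le> g k" using g unfolding carrier_PG by (auto simp: PiE_iff)
        then show ?thesis using z[OF True] True by (simp add: bits_def)
      next
        case False
        then show ?thesis using g unfolding carrier_PG by (auto simp: PiE_iff extensional_def)
      qed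
    qed
    then show "g \<in> {\<one>\<^bsub>PG\<^esub>}" by simp
  qed
qed

theorem lemma3p2:
  shows "(\<forall>M \<in> pauli_mats.
            (\<forall>x \<in> E8_roots. mulv8 M x \<in> E8_roots) \<and>
            (\<forall>x \<in> E8_roots. sigma M (vtx x) = vtx (mulv8 M x)) \<and>
            sigma M \<in> carrier Aut_E8)
       \<and> subgroup L_E8 Aut_E8
       \<and> Aut_E8\<lparr>carrier := L_E8\<rparr> \<cong> product_group {..<(6::nat)} (\<lambda>_. integer_mod_group 2)"
proof (intro conjI ballI)
  fix M assume "M \<in> pauli_mats"
  then obtain g where g: "g \<in> carrier PG" and M: "M = Mb (bits g)" unfolding pauli_eq by blast
  have b: "okb (bits g)" by (rule okb_bits[OF g])
  show "mulv8 M x \<in> E8_roots" if "x \<in> E8_roots" for x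
    unfolding M mulv8_Mb[OF b] by (rule sp_E8_b[OF that])
  show "sigma M (vtx x) = vtx (mulv8 M x)" if "x \<in> E8_roots" for x
    using sig_vtx[OF b that] unfolding M mulv8_Mb[OF b] sig_def .
  show "sigma M \<in> carrier Aut_E8" using sig_carrier[OF b] unfolding M sig_def .
next
  show "subgroup L_E8 Aut_E8" unfolding L_eq by (rule group_hom.img_is_subgroup[OF group_hom_phi])
next
  have inj: "inj_on phi (carrier PG)"
    using group_hom.inj_iff_trivial_ker[OF group_hom_phi] kernel_phi by simp
  have "phi \<in> iso PG (Aut_E8\<lparr>carrier := L_E8\<rparr>)"
  proof (rule isoI)
    show "phi \<in> hom PG (Aut_E8\<lparr>carrier := L_E8\<rparr>)"
      using phi_hom unfolding hom_def L_eq by auto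
    show "bij_betw phi (carrier PG) (carrier (Aut_E8\<lparr>carrier := L_E8\<rparr>))"
      using inj unfolding L_eq bij_betw_def by simp
  qed
  then have "PG \<cong> Aut_E8\<lparr>carrier := L_E8\<rparr>" by (rule is_isoI)
  then show "Aut_E8\<lparr>carrier := L_E8\<rparr> \<cong> PG" by (rule group.iso_sym[OF group_PG])
qed

end
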